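(* Let $A\subset\mathbf{Z}_{\geq0}$ be finite with $0\in A$, $N=\#A\geq 2$, $A(x)=\sum_{a\in A}x^a$ irreducible over $\mathbf{Q}$. Suppose $A(x)$ has a spectrum $\{\theta_1,\dots,\theta_{N-1}\}$ with $\theta_1\notin\mathbf{Q}$. Then $A(x)$ has at least $N$ distinct roots $x$ with $|x|\neq1$, and $\deg A(x)\geq\frac{5N}{2}$.
   Context: A set $\{\theta_1,\dots,\theta_{N-1}\}\subset(0,1)$ is called a spectrum for $A(x)$ if the $\theta_j$ are pairwise distinct and, with $\theta_0=0$, $A(e^{2\pi i(\theta_i-\theta_j)})=0$ for all $0\leq i,j\leq N-1$ with $i\neq j$. *)

theory Defs
  imports "HOL-Analysis.Analysis" "HOL-Computational_Algebra.Computational_Algebra"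
begin

definition mask_poly :: "nat set \<Rightarrow> rat poly" where
  "mask_poly A = (\<Sum>a\<in>A. monom 1 a)"

definition is_spectrum :: "rat poly \<Rightarrow> nat \<Rightarrow> (nat \<Rightarrow> real) \<Rightarrow> bool" where
  "is_spectrum P N \<theta> \<longleftrightarrow>
     (\<forall>j\<in>{1..<N}. 0 < \<theta> j \<and> \<theta> j < 1) \<and>
     inj_on \<theta> {1..<N} \<and>
     (let \<theta>' = \<theta>(0 := 0) in
       \<forall>i<N. \<forall>j<N. i \<noteq> j \<longrightarrow>
         poly (map_poly of_rat P) (exp (2 * of_real pi * \<i> * of_real (\<theta>' i - \<theta>' j))) = (0::complex))"

end

theory Submission
  imports Defs "HOL-Computational_Algebra.Field_as_Ring" "Jordan_Normal_Form.Determinant"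
begin

section \<open>of_rat polynomial maps\<close>

abbreviation rc :: "rat poly \<Rightarrow> complex poly" where "rc p \<equiv> map_poly of_rat p"

lemma rc_add: "rc (p + q) = rc p + rc q"
  by (intro poly_eqI) (simp add: coeff_map_poly of_rat_add)

lemma rc_pCons: "rc (pCons a p) = pCons (of_rat a) (rc p)"
  by (simp add: map_poly_pCons)

lemma rc_smult: "rc (Polynomial.smult a p) = Polynomial.smult (of_rat a) (rc p)"
  by (intro poly_eqI) (simp add: coeff_map_poly of_rat_mult)

lemma rc_mult: "rc (p * q) = rc p * rc q"
proof (induction p)
  case 0
  then show ?case by simp
next
  case (pCons a p)
  then show ?case by (simp add: rc_add rc_smult rc_pCons map_poly_pCons)
qed

lemma rc_1: "rc 1 = 1" by simp

lemma rc_pderiv: "rc (pderiv p) = pderiv (rc p)"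
  by (intro poly_eqI) (simp add: coeff_map_poly coeff_pderiv of_rat_mult of_rat_add of_rat_of_nat_eq)

lemma rc_degree: "degree (rc p) = degree p"
  by (simp add: degree_map_poly)

lemma rc_reflect: "rc (reflect_poly p) = reflect_poly (rc p)"
  by (intro poly_eqI) (simp add: coeff_map_poly coeff_reflect_poly rc_degree)

lemma rc_eq_0: "rc p = 0 \<longleftrightarrow> p = 0"
  by (simp add: map_poly_eq_0_iff)

lemma irr_dvd:
  fixes P p :: "rat poly"
  assumes "irreducible P" "poly (rc P) z = 0" "poly (rc p) z = 0"
  shows "P dvd p"
proof (rule ccontr)
  assume nd: "\<not> P dvd p"
  have "prime_elem P" using assms(1) by (rule field_poly_irreducible_imp_prime)
  then have "coprime P p" using nd by (meson coprimeI dvd_trans prime_elemD2)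
  then have g: "gcd P p = 1" by simp
  obtain x y where "bezout_coefficients P p = (x, y)" by (cases "bezout_coefficients P p")
  then have "x * P + y * p = 1" using bezout_coefficients g by metis
  then have "rc (x * P + y * p) = 1" by simp
  then have "poly (rc x * rc P + rc y * rc p) z = 1" by (simp add: rc_add rc_mult)
  then show False using assms by simp
qed

lemma irr_rsquarefree:
  fixes P :: "rat poly"
  assumes "irreducible P"
  shows "rsquarefree (rc P)"
  unfolding rsquarefree_roots
proof (intro allI notI)
  fix a assume h: "poly (rc P) a = 0 \<and> poly (pderiv (rc P)) a = 0"
  have dP: "degree P > 0"
    using assms by (metis irreducible_def is_unit_iff_degree neq0_conv)
  have "P dvd pderiv P" using irr_dvd[OF assms, of a "pderiv P"] h by (simp add: rc_pderiv)
  moreover have "pderiv P \<noteq> 0" using dP by (simp add: pderiv_eq_0_iff)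
  moreover have "degree (pderiv P) < degree P" using dP by (simp add: degree_pderiv)
  ultimately show False using dvd_imp_degree_le by fastforce
qed

lemma card_roots_rsquarefree:
  fixes p :: "complex poly"
  assumes "rsquarefree p"
  shows "card {x. poly p x = 0} = degree p"
proof -
  have p0: "p \<noteq> 0" using assms rsquarefree_def by blast
  have "proots p = mset_set {x. poly p x = 0}"
  proof (rule multiset_eqI)
    fix x
    show "count (proots p) x = count (mset_set {x. poly p x = 0}) x"
    proof (cases "poly p x = 0")
      case True
      then show ?thesis using rsquarefree_root_order[OF assms] p0 poly_roots_finite[OF p0]
        by (simp add: count_proots count_mset_set)
    next
      case False
      then show ?thesis using p0 poly_roots_finite[OF p0]
        by (simp add: count_proots count_mset_set order_root)
    qed
  qed
  then show ?thesis using size_proots_complex[of p] by simp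
qed

section \<open>Polynomial functions with integer coefficients\<close>

inductive_set PF :: "nat \<Rightarrow> ((nat \<Rightarrow> complex) \<Rightarrow> complex) set" for n where
  PF_const: "(\<lambda>v. of_int c) \<in> PF n"
| PF_var: "i < n \<Longrightarrow> (\<lambda>v. v i) \<in> PF n"
| PF_add: "f \<in> PF n \<Longrightarrow> g \<in> PF n \<Longrightarrow> (\<lambda>v. f v + g v) \<in> PF n"
| PF_mult: "f \<in> PF n \<Longrightarrow> g \<in> PF n \<Longrightarrow> (\<lambda>v. f v * g v) \<in> PF n"

lemma PF_0c: "(\<lambda>v. 0) \<in> PF n" using PF_const[of 0] by simp
lemma PF_1c: "(\<lambda>v. 1) \<in> PF n" using PF_const[of 1] by simp

lemma PF_neg: "f \<in> PF n \<Longrightarrow> (\<lambda>v. - f v) \<in> PF n"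
  using PF_mult[OF PF_const[of "-1"]] by simp

lemma PF_diff: "f \<in> PF n \<Longrightarrow> g \<in> PF n \<Longrightarrow> (\<lambda>v. f v - g v) \<in> PF n"
  using PF_add[OF _ PF_neg] by simp

lemma PF_pow: "f \<in> PF n \<Longrightarrow> (\<lambda>v. f v ^ k) \<in> PF n"
  by (induction k) (auto intro: PF_mult PF_1c)

lemma PF_sum: "finite S \<Longrightarrow> (\<And>s. s \<in> S \<Longrightarrow> f s \<in> PF n) \<Longrightarrow> (\<lambda>v. \<Sum>s\<in>S. f s v) \<in> PF n"
  by (induction S rule: finite_induct) (auto intro: PF_add PF_0c)

lemma PF_prod: "finite S \<Longrightarrow> (\<And>s. s \<in> S \<Longrightarrow> f s \<in> PF n) \<Longrightarrow> (\<lambda>v. \<Prod>s\<in>S. f s v) \<in> PF n"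
  by (induction S rule: finite_induct) (auto intro: PF_mult PF_1c)

lemma PF_local: "f \<in> PF n \<Longrightarrow> (\<And>i. i < n \<Longrightarrow> v i = v' i) \<Longrightarrow> f v = f v'"
  by (induction rule: PF.induct) auto

lemma PF_mono: "f \<in> PF n \<Longrightarrow> n \<le> m \<Longrightarrow> f \<in> PF m"
  by (induction rule: PF.induct) (auto intro: PF.intros)

lemma PF_subst:
  assumes "g \<in> PF m" "\<And>j. j < m \<Longrightarrow> h j \<in> PF n"
  shows "(\<lambda>v. g (\<lambda>j. h j v)) \<in> PF n"
  using assms by (induction rule: PF.induct) (auto intro: PF.intros)

lemma PF_zero_const: "f \<in> PF 0 \<Longrightarrow> \<exists>c::int. \<forall>v. f v = of_int c"
proof (induction rule: PF.induct)
  case (PF_const c) then show ?case by auto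
next
  case (PF_var i) then show ?case by auto
next
  case (PF_add f g) then show ?case by (metis of_int_add)
next
  case (PF_mult f g) then show ?case by (metis of_int_mult)
qed

lemma sum_delta_mult:
  fixes x :: "nat \<Rightarrow> 'a::comm_ring_1"
  assumes "k < M"
  shows "(\<Sum>s<M. (if k = s then a else 0) * x s) = a * x k"
proof -
  have "(\<Sum>s<M. (if k = s then a else 0) * x s) = (\<Sum>s<M. if k = s then a * x s else 0)"
    by (rule sum.cong) auto
  also have "\<dots> = a * x k" using assms by (simp add: sum.delta)
  finally show ?thesis .
qed

lemma PF_repr:
  assumes "f \<in> PF (Suc n)"
  shows "\<exists>c m. (\<forall>k. c k \<in> PF n) \<and> (\<forall>v. f v = (\<Sum>k<m. c k v * v n ^ k))"
  using assms
proof (induction rule: PF.induct)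
  case (PF_const c0)
  have hc: "(\<lambda>v. of_int (if k = 0 then c0 else 0)) \<in> PF n" for k by (rule PF.PF_const)
  show ?case
    apply (rule exI[of _ "\<lambda>k v. of_int (if k = 0 then c0 else 0)"], rule exI[of _ 1])
    using hc[of 0] hc[of 1] by (auto simp: PF_0c)
next
  case (PF_var i)
  show ?case
  proof (cases "i < n")
    case True
    have "(\<lambda>a. if k = 0 then a i else 0) \<in> PF n" for k
      by (cases "k = 0") (use PF.PF_var[OF \<open>i < n\<close>] PF_0c in auto)
    then show ?thesis
      by (intro exI[of _ "\<lambda>k v. if k = 0 then v i else 0"] exI[of _ 1]) auto
  next
    case False
    then have i: "i = n" using PF_var by simp
    have "(\<lambda>v. if k = 1 then 1 else 0) \<in> PF n" for k
      by (cases "k = 1") (auto intro: PF_1c PF_0c)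
    then show ?thesis
      by (intro exI[of _ "\<lambda>k v. if k = 1 then 1 else 0"] exI[of _ 2])
         (auto simp: i PF_0c PF_1c numeral_2_eq_2)
  qed
next
  case (PF_add f g)
  then obtain c1 m1 c2 m2 where h1: "\<forall>k. c1 k \<in> PF n" "\<forall>v. f v = (\<Sum>k<m1. c1 k v * v n ^ k)"
    and h2: "\<forall>k. c2 k \<in> PF n" "\<forall>v. g v = (\<Sum>k<m2. c2 k v * v n ^ k)" by blast
  define C where "C = (\<lambda>k v. (if k < m1 then c1 k v else 0) + (if k < m2 then c2 k v else 0))"
  have C: "C k \<in> PF n" for k
    unfolding C_def by (cases "k < m1"; cases "k < m2") (auto intro: PF.PF_add PF_0c h1 h2 simp: h1 h2)
  have e1: "(\<Sum>k<m1. c1 k v * v n ^ k) = (\<Sum>k<m1+m2. (if k < m1 then c1 k v else 0) * v n ^ k)" for v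
    by (rule sum.mono_neutral_cong_left) auto
  have e2: "(\<Sum>k<m2. c2 k v * v n ^ k) = (\<Sum>k<m1+m2. (if k < m2 then c2 k v else 0) * v n ^ k)" for v
    by (rule sum.mono_neutral_cong_left) auto
  have eq: "\<forall>v. f v + g v = (\<Sum>k<m1+m2. C k v * v n ^ k)"
    by (auto simp: h1(2) h2(2) e1 e2 C_def distrib_right sum.distrib)
  show ?case using C eq by blast
next
  case (PF_mult f g)
  then obtain c1 m1 c2 m2 where h1: "\<forall>k. c1 k \<in> PF n" "\<forall>v. f v = (\<Sum>k<m1. c1 k v * v n ^ k)"
    and h2: "\<forall>k. c2 k \<in> PF n" "\<forall>v. g v = (\<Sum>k<m2. c2 k v * v n ^ k)" by blast
  define C where "C = (\<lambda>s v. \<Sum>k<m1. \<Sum>l<m2. if k + l = s then c1 k v * c2 l v else 0)"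
  have C: "C s \<in> PF n" for s
    unfolding C_def
  proof (intro PF_sum)
    fix k l
    show "(\<lambda>v. if k + l = s then c1 k v * c2 l v else 0) \<in> PF n"
      by (cases "k + l = s") (use PF.PF_mult[of "c1 k" n "c2 l"] h1 h2 PF_0c in auto)
  qed auto
  have "f v * g v = (\<Sum>s<m1+m2. C s v * v n ^ s)" for v
  proof -
    have "f v * g v = (\<Sum>k<m1. \<Sum>l<m2. c1 k v * c2 l v * v n ^ (k + l))"
      by (simp add: h1 h2 sum_product power_add mult_ac)
    also have "\<dots> = (\<Sum>k<m1. \<Sum>l<m2. \<Sum>s<m1+m2. (if k + l = s then c1 k v * c2 l v else 0) * v n ^ s)"
      by (intro sum.cong refl) (simp add: sum_delta_mult)
    also have "\<dots> = (\<Sum>s<m1+m2. C s v * v n ^ s)"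
      unfolding C_def sum_distrib_right
      by (subst sum.swap, rule sum.cong, simp, subst sum.swap, simp)
    finally show ?thesis .
  qed
  then show ?case using C by blast
qed

fun red :: "(nat \<Rightarrow> int) \<Rightarrow> nat \<Rightarrow> nat \<Rightarrow> nat \<Rightarrow> int" where
  "red qc d 0 k = (if k = 0 then 1 else 0)"
| "red qc d (Suc n) k = (if k = 0 then 0 else red qc d n (k - 1)) - red qc d n (d - 1) * qc k"

lemma red_eq:
  fixes r :: complex
  assumes d: "d = Suc e" and root: "r ^ d = - (\<Sum>k<d. of_int (qc k) * r ^ k)"
  shows "r ^ n = (\<Sum>k<d. of_int (red qc d n k) * r ^ k)"
proof (induction n)
  case 0
  have "(\<Sum>k<d. of_int (red qc d 0 k) * r ^ k) = (\<Sum>k<d. if k = 0 then 1 else (0::complex))"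
    by (rule sum.cong) auto
  also have "\<dots> = 1" using d by (simp add: sum.delta')
  finally show ?case by simp
next
  case (Suc n)
  define f where "f = (\<lambda>k. (of_int (red qc d n k) :: complex))"
  have "r ^ Suc n = r * (\<Sum>k<d. f k * r ^ k)" using Suc by (simp add: f_def)
  also have "\<dots> = (\<Sum>k<d. f k * r ^ Suc k)" by (simp add: sum_distrib_left mult_ac)
  also have "\<dots> = (\<Sum>k<e. f k * r ^ Suc k) + f e * r ^ d" using d by simp
  also have "\<dots> = (\<Sum>k<e. f k * r ^ Suc k) - f e * (\<Sum>k<d. of_int (qc k) * r ^ k)"
    using root by simp
  also have "\<dots> = (\<Sum>k<d. of_int (red qc d (Suc n) k) * r ^ k)"
  proof -
    have pw: "of_int (red qc d (Suc n) k) = (if k = 0 then 0 else f (k - 1)) - f e * of_int (qc k)" for k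
      using d by (simp add: f_def)
    have "(\<Sum>k<d. of_int (red qc d (Suc n) k) * r ^ k) =
          (\<Sum>k<d. (if k = 0 then 0 else f (k - 1)) * r ^ k) - f e * (\<Sum>k<d. of_int (qc k) * r ^ k)"
    proof -
      have "(\<Sum>k<d. of_int (red qc d (Suc n) k) * r ^ k) =
          (\<Sum>k<d. ((if k = 0 then 0 else f (k - 1)) - f e * of_int (qc k)) * r ^ k)"
        by (rule sum.cong[OF refl]) (simp only: pw)
      also have "\<dots> = (\<Sum>k<d. (if k = 0 then 0 else f (k - 1)) * r ^ k) - (\<Sum>k<d. f e * of_int (qc k) * r ^ k)"
        by (simp only: left_diff_distrib sum_subtractf)
      also have "\<dots> = (\<Sum>k<d. (if k = 0 then 0 else f (k - 1)) * r ^ k) - f e * (\<Sum>k<d. of_int (qc k) * r ^ k)"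
        by (simp only: sum_distrib_left mult.assoc)
      finally show ?thesis .
    qed
    moreover have "(\<Sum>k<d. (if k = 0 then 0 else f (k - 1)) * r ^ k) = (\<Sum>k<e. f k * r ^ Suc k)"
      unfolding d by (subst sum.lessThan_Suc_shift) simp
    ultimately show ?thesis by simp
  qed
  finally show ?case .
qed

lemma root_pow_degree:
  fixes Q :: "complex poly"
  assumes "lead_coeff Q = 1" "degree Q = d" "poly Q r = 0"
  shows "r ^ d = - (\<Sum>k<d. coeff Q k * r ^ k)"
proof -
  have "0 = (\<Sum>k\<le>d. coeff Q k * r ^ k)" using assms by (simp add: poly_altdef)
  also have "\<dots> = (\<Sum>k<d. coeff Q k * r ^ k) + r ^ d" using assms
    by (simp add: lessThan_Suc_atMost[symmetric])
  finally show ?thesis by (simp add: eq_neg_iff_add_eq_0 add.commute)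
qed

lemma eqm_lemma:
  fixes rt :: "nat \<Rightarrow> complex" and a :: "nat \<Rightarrow> complex"
  assumes root: "\<And>i n. i < d \<Longrightarrow> rt i ^ n = (\<Sum>k<d. of_int (red qc d n k) * rt i ^ k)"
  shows "mat d d (\<lambda>(i,k). rt i ^ k) * mat d d (\<lambda>(k,j). \<Sum>s<m. a s * of_int (red qc d (j + s) k))
       = mat d d (\<lambda>(i,j). if i = j then (\<Sum>k<m. a k * rt i ^ k) else 0) * mat d d (\<lambda>(i,k). rt i ^ k)"
    (is "?V * ?M = ?D * ?V")
proof (rule eq_matI)
  fix i j assume ij: "i < dim_row (?D * ?V)" "j < dim_col (?D * ?V)"
  then have i: "i < d" and j: "j < d" by auto
  have "(?V * ?M) $$ (i, j) = (\<Sum>k = 0..<d. rt i ^ k * (\<Sum>s<m. a s * of_int (red qc d (j + s) k)))"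
    using i j by (simp add: scalar_prod_def)
  also have "\<dots> = (\<Sum>k<d. \<Sum>s<m. a s * (of_int (red qc d (j + s) k) * rt i ^ k))"
    unfolding atLeast0LessThan sum_distrib_left
    by (rule sum.cong[OF refl], rule sum.cong[OF refl]) (simp only: ac_simps)
  also have "\<dots> = (\<Sum>s<m. \<Sum>k<d. a s * (of_int (red qc d (j + s) k) * rt i ^ k))"
    by (rule sum.swap)
  also have "\<dots> = (\<Sum>s<m. a s * (\<Sum>k<d. of_int (red qc d (j + s) k) * rt i ^ k))"
    by (simp only: sum_distrib_left)
  also have "\<dots> = (\<Sum>s<m. a s * rt i ^ (j + s))"
  proof (rule sum.cong[OF refl])
    fix s
    show "a s * (\<Sum>k<d. of_int (red qc d (j + s) k) * rt i ^ k) = a s * rt i ^ (j + s)"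
      using root[OF i, of "j + s"] by simp
  qed
  also have "\<dots> = (\<Sum>k<m. a k * rt i ^ k) * rt i ^ j"
    unfolding sum_distrib_right by (rule sum.cong[OF refl]) (simp add: power_add ac_simps)
  also have "\<dots> = (?D * ?V) $$ (i, j)"
  proof -
    have "(?D * ?V) $$ (i, j) = (\<Sum>k = 0..<d. (if i = k then (\<Sum>k<m. a k * rt i ^ k) else 0) * rt k ^ j)"
      using i j by (simp add: scalar_prod_def)
    also have "\<dots> = (\<Sum>k = 0..<d. if i = k then (\<Sum>k<m. a k * rt i ^ k) * rt i ^ j else 0)"
      by (rule sum.cong[OF refl]) simp
    also have "\<dots> = (\<Sum>k<m. a k * rt i ^ k) * rt i ^ j"
      using i by (simp add: sum.delta)
    finally show ?thesis by simp
  qed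
  finally show "(?V * ?M) $$ (i, j) = (?D * ?V) $$ (i, j)" .
qed auto

lemma norm_lemma:
  fixes Q :: "complex poly" and qc :: "nat \<Rightarrow> int"
  assumes sq: "rsquarefree Q" and lc: "lead_coeff Q = 1" and dQ: "degree Q = d" and d1: "d \<ge> 1"
    and qc: "\<forall>k<d. coeff Q k = of_int (qc k)"
  shows "\<exists>g \<in> PF m. \<forall>a. g a = (\<Prod>r\<in>{x. poly Q x = 0}. \<Sum>k<m. a k * r ^ k)"
proof -
  define R where "R = {x. poly Q x = 0}"
  have Q0: "Q \<noteq> 0" using sq rsquarefree_def by blast
  have finR: "finite R" unfolding R_def using poly_roots_finite[OF Q0] .
  have cardR: "card R = d" unfolding R_def using card_roots_rsquarefree[OF sq] dQ by simp
  obtain rt where rt: "bij_betw rt {0..<d} R" using ex_bij_betw_nat_finite[OF finR] cardR by auto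
  obtain e where de: "d = Suc e" using d1 by (cases d) auto
  have rootR: "r ^ n = (\<Sum>k<d. of_int (red qc d n k) * r ^ k)" if "r \<in> R" for r n
  proof (rule red_eq[OF de])
    have "r ^ d = - (\<Sum>k<d. coeff Q k * r ^ k)"
      using root_pow_degree[OF lc dQ] that by (simp add: R_def)
    then show "r ^ d = - (\<Sum>k<d. of_int (qc k) * r ^ k)" using qc by simp
  qed
  have rtR: "rt i \<in> R" if "i < d" for i using rt that by (auto simp: bij_betw_def)
  define P where "P = (\<lambda>a x. \<Sum>k<m. a k * (x::complex) ^ k)"
  define V where "V = mat d d (\<lambda>(i,k). rt i ^ k)"
  define Ma where "Ma = (\<lambda>a. mat d d (\<lambda>(k,j). \<Sum>s<m. a s * of_int (red qc d (j + s) k) :: complex))"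
  define D where "D = (\<lambda>a. mat d d (\<lambda>(i,j). if i = j then P a (rt i) else 0))"
  have Vc: "V \<in> carrier_mat d d" unfolding V_def by simp
  have Mc: "Ma a \<in> carrier_mat d d" for a unfolding Ma_def by simp
  have Dc: "D a \<in> carrier_mat d d" for a unfolding D_def by simp
  have eqm: "V * Ma a = D a * V" for a
    unfolding V_def Ma_def D_def P_def
    by (rule eqm_lemma) (rule rootR[OF rtR], assumption)
  have detV: "Determinant.det V \<noteq> 0"
  proof
    assume "Determinant.det V = 0"
    then obtain v where v: "v \<in> carrier_vec d" "v \<noteq> 0\<^sub>v d" "V *\<^sub>v v = 0\<^sub>v d"
      using det_0_iff_vec_prod_zero[OF Vc] by auto
    define p where "p = (\<Sum>k<d. monom (v $ k) k)"
    have cp: "coeff p n = (if n < d then v $ n else 0)" for n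
      by (simp add: p_def coeff_sum coeff_monom)
    have pv: "poly p x = (\<Sum>k<d. v $ k * x ^ k)" for x
      by (simp add: p_def poly_sum poly_monom)
    have "poly p (rt i) = 0" if "i < d" for i
    proof -
      have "(V *\<^sub>v v) $ i = 0" using v that by simp
      then have "(\<Sum>k = 0..<d. rt i ^ k * v $ k) = 0"
        using that v by (simp add: V_def scalar_prod_def)
      then show ?thesis by (simp add: pv mult_ac atLeast0LessThan)
    qed
    then have sub: "R \<subseteq> {x. poly p x = 0}" using rt by (auto simp: bij_betw_def)
    show False
    proof (cases "p = 0")
      case True
      then have "v $ k = 0" if "k < d" for k using cp[of k] that by simp
      then have "v = 0\<^sub>v d" using v by (intro eq_vecI) auto
      then show False using v by simp
    next
      case False
      have "degree p < d"
      proof (rule ccontr)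
        assume "\<not> degree p < d"
        then have "coeff p (degree p) = 0" using cp by simp
        then show False using False by simp
      qed
      moreover have "card R \<le> card {x. poly p x = 0}"
        by (rule card_mono[OF poly_roots_finite[OF False] sub])
      moreover have "card {x. poly p x = 0} \<le> degree p" using card_poly_roots_bound[OF False] .
      ultimately show False using cardR by simp
    qed
  qed
  have detD: "Determinant.det (D a) = (\<Prod>i<d. P a (rt i))" for a
  proof -
    have "upper_triangular (D a)" unfolding D_def upper_triangular_def by auto
    then have "Determinant.det (D a) = prod_list (diag_mat (D a))"
      using det_upper_triangular Dc by blast
    also have "\<dots> = (\<Prod>i<d. P a (rt i))"
    proof -
      have "diag_mat (D a) = map (\<lambda>i. P a (rt i)) [0..<d]"
        by (simp add: diag_mat_def D_def)
      then show ?thesis by (simp add: prod.distinct_set_conv_list[symmetric] atLeast0LessThan)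
    qed
    finally show ?thesis .
  qed
  have detM: "Determinant.det (Ma a) = (\<Prod>r\<in>R. P a r)" for a
  proof -
    have "Determinant.det V * Determinant.det (Ma a) = Determinant.det (D a) * Determinant.det V"
      using eqm[of a] det_mult[OF Vc Mc[of a]] det_mult[OF Dc[of a] Vc] by metis
    then have "Determinant.det (Ma a) = Determinant.det (D a)"
      using detV by (metis mult.commute mult_left_cancel)
    also have "\<dots> = (\<Prod>i<d. P a (rt i))" by (rule detD)
    also have "\<dots> = (\<Prod>r\<in>R. P a r)"
      using prod.reindex_bij_betw[OF rt, of "P a"] by (simp add: atLeast0LessThan)
    finally show ?thesis .
  qed
  define G where "G = (\<lambda>a. \<Sum>p\<in>{p. p permutes {0..<d}}. of_int (sign p) *
                      (\<Prod>i\<in>{0..<d}. \<Sum>s<m. a s * of_int (red qc d (p i + s) i)) :: complex)"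
  have GPF: "G \<in> PF m"
    unfolding G_def
    apply (rule PF_sum)
     apply (rule finite_permutations, simp)
    apply (rule PF.PF_mult)
     apply (rule PF.PF_const)
    apply (rule PF_prod)
     apply simp
    apply (rule PF_sum)
     apply simp
    apply (rule PF.PF_mult)
     apply (rule PF.PF_var)
     apply simp
    apply (rule PF.PF_const)
    done
  have "G a = Determinant.det (Ma a)" for a
  proof -
    have "Determinant.det (Ma a) = (\<Sum>p\<in>{p. p permutes {0..<d}}. of_int (sign p) *
                      (\<Prod>i = 0..<d. Ma a $$ (i, p i)))"
      by (simp add: det_def Ma_def)
    also have "\<dots> = G a"
      unfolding G_def
    proof (rule sum.cong[OF refl], rule arg_cong2[where f = "(*)"], simp, rule prod.cong[OF refl])
      fix p i assume "p \<in> {p. p permutes {0..<d}}" "i \<in> {0..<d}"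
      then have "p i < d" using permutes_in_image by fastforce
      then show "Ma a $$ (i, p i) = (\<Sum>s<m. a s * of_int (red qc d (p i + s) i))"
        using \<open>i \<in> {0..<d}\<close> by (simp add: Ma_def)
    qed
    finally show ?thesis by simp
  qed
  then show ?thesis using GPF detM by (auto simp: R_def P_def)
qed

definition spec :: "nat \<Rightarrow> (nat \<Rightarrow> complex) \<Rightarrow> (nat \<Rightarrow> complex) \<Rightarrow> bool" where
  "spec n z y \<longleftrightarrow> (\<forall>f\<in>PF n. f z = 0 \<longrightarrow> f y = 0)"

lemma specD: "spec n z y \<Longrightarrow> f \<in> PF n \<Longrightarrow> f z = 0 \<Longrightarrow> f y = 0"
  unfolding spec_def by blast

lemma exists_nat_avoid:
  fixes S :: "complex set"
  assumes "finite S"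
  shows "\<exists>c::nat. of_nat c \<notin> S"
proof -
  have "finite {c::nat. of_nat c \<in> S}"
  proof -
    have inj: "inj (of_nat :: nat \<Rightarrow> complex)" by (auto simp: inj_def)
    show ?thesis using finite_vimageI[OF assms inj] by (simp add: vimage_def)
  qed
  then obtain c where "c \<notin> {c::nat. of_nat c \<in> S}" using ex_new_if_finite[OF infinite_UNIV_nat] by blast
  then show ?thesis by auto
qed

lemma combine:
  assumes "finite T" "\<forall>\<beta>\<in>T. \<exists>f\<in>PF k. f z = 0 \<and> f (Y \<beta>) \<noteq> 0"
  shows "\<exists>F\<in>PF k. F z = 0 \<and> (\<forall>\<beta>\<in>T. F (Y \<beta>) \<noteq> 0)"
  using assms
proof (induction T rule: finite_induct)
  case empty
  then show ?case using PF_0c by auto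
next
  case (insert b T)
  then obtain F where F: "F \<in> PF k" "F z = 0" "\<forall>\<beta>\<in>T. F (Y \<beta>) \<noteq> 0" by auto
  obtain f where f: "f \<in> PF k" "f z = 0" "f (Y b) \<noteq> 0" using insert.prems by auto
  obtain c :: nat where c: "of_nat c \<notin> (\<lambda>\<beta>. - F (Y \<beta>) / f (Y \<beta>)) ` insert b T"
    using exists_nat_avoid[of "(\<lambda>\<beta>. - F (Y \<beta>) / f (Y \<beta>)) ` insert b T"] insert.hyps by auto
  define G where "G = (\<lambda>v. F v + of_int (int c) * f v)"
  have "G \<in> PF k" unfolding G_def by (intro PF.PF_add PF.PF_mult PF.PF_const F f)
  moreover have "G z = 0" using F f by (simp add: G_def)
  moreover have "G (Y \<beta>) \<noteq> 0" if "\<beta> \<in> insert b T" for \<beta>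
  proof
    assume G0: "G (Y \<beta>) = 0"
    show False
    proof (cases "f (Y \<beta>) = 0")
      case True
      then have "\<beta> \<noteq> b" using f by auto
      then have "\<beta> \<in> T" using that by auto
      then show False using F G0 True by (simp add: G_def)
    next
      case False
      then have "of_nat c = - F (Y \<beta>) / f (Y \<beta>)" using G0
        by (simp add: G_def field_simps) (simp add: algebra_simps eq_neg_iff_add_eq_0)
      then show False using c that by auto
    qed
  qed
  ultimately show ?case by blast
qed

lemma step_lemma:
  fixes Q :: "complex poly"
  assumes normQ: "\<And>m. \<exists>g\<in>PF m. \<forall>a. g a = (\<Prod>r\<in>{x. poly Q x = 0}. \<Sum>k<m. a k * r ^ k)"
    and Q0: "Q \<noteq> 0" and sp: "spec n z y" and rz: "poly Q (z n) = 0"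
  shows "\<exists>\<beta>. poly Q \<beta> = 0 \<and> spec (Suc n) z (y(n := \<beta>))"
proof (rule ccontr)
  assume nt: "\<not> (\<exists>\<beta>. poly Q \<beta> = 0 \<and> spec (Suc n) z (y(n := \<beta>)))"
  define R where "R = {x. poly Q x = 0}"
  have finR: "finite R" unfolding R_def using poly_roots_finite[OF Q0] .
  have "\<forall>\<beta>\<in>R. \<exists>f\<in>PF (Suc n). f z = 0 \<and> f (y(n := \<beta>)) \<noteq> 0"
    using nt unfolding spec_def R_def by blast
  from combine[OF finR this] obtain F where
    F: "F \<in> PF (Suc n)" "F z = 0" "\<forall>\<beta>\<in>R. F (y(n := \<beta>)) \<noteq> 0" by blast
  obtain c m where cm: "\<forall>k. c k \<in> PF n" "\<forall>v. F v = (\<Sum>k<m. c k v * v n ^ k)"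
    using PF_repr[OF F(1)] by blast
  obtain g where g: "g \<in> PF m" "\<forall>a. g a = (\<Prod>r\<in>R. \<Sum>k<m. a k * r ^ k)"
    using normQ[of m] unfolding R_def by blast
  define G where "G = (\<lambda>v. g (\<lambda>k. c k v))"
  have GPF: "G \<in> PF n" unfolding G_def by (rule PF_subst[OF g(1)]) (use cm in auto)
  have Gv: "G v = (\<Prod>r\<in>R. \<Sum>k<m. c k v * r ^ k)" for v using g by (simp add: G_def)
  have "z n \<in> R" using rz by (simp add: R_def)
  moreover have "(\<Sum>k<m. c k z * z n ^ k) = 0" using cm F by simp
  ultimately have "G z = 0" using finR by (auto simp: Gv intro: prod_zero)
  then have "G y = 0" using specD[OF sp GPF] by simp
  then obtain r where r: "r \<in> R" "(\<Sum>k<m. c k y * r ^ k) = 0" using finR by (auto simp: Gv)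
  have "c k (y(n := r)) = c k y" for k
    by (rule PF_local[OF cm(1)[rule_format]]) auto
  then have "F (y(n := r)) = (\<Sum>k<m. c k y * r ^ k)" using cm(2) by simp
  then show False using r F(3) by simp
qed

lemma rc_sum_monom:
  "poly (rc (\<Sum>k<m. monom (of_int (e k)) k)) x = (\<Sum>k<m. of_int (e k) * x ^ k)"
proof (induction m)
  case 0 then show ?case by simp
next
  case (Suc m)
  then show ?case by (simp add: rc_add map_poly_monom poly_monom)
qed

lemma lemmaG:
  fixes P :: "rat poly"
  assumes irr: "irreducible P"
    and normQ: "\<And>m. \<exists>g\<in>PF m. \<forall>a. g a = (\<Prod>r\<in>{x. poly (rc P) x = 0}. \<Sum>k<m. a k * r ^ k)"
    and zr: "\<And>i. i < n \<Longrightarrow> poly (rc P) (z i) = 0" and n1: "n \<ge> 1" and w: "poly (rc P) w = 0"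
  shows "\<exists>y. y 0 = w \<and> spec n z y"
proof -
  have P0: "P \<noteq> 0" using irr by auto
  have Q0: "rc P \<noteq> 0" using P0 by (simp add: rc_eq_0)
  have base: "spec 1 z (\<lambda>_. w)"
    unfolding spec_def
  proof (intro ballI impI)
    fix f assume f: "f \<in> PF 1" "f z = 0"
    obtain c m where cm: "\<forall>k. c k \<in> PF 0" "\<forall>v. f v = (\<Sum>k<m. c k v * v 0 ^ k)"
      using PF_repr[of f 0] f by auto
    have "\<forall>k. \<exists>e::int. \<forall>v. c k v = of_int e" using cm(1) PF_zero_const by blast
    then obtain e where e: "\<And>k v. c k v = of_int (e k)" by metis
    define p :: "rat poly" where "p = (\<Sum>k<m. monom (of_int (e k)) k)"
    have pv: "f v = poly (rc p) (v 0)" for v by (simp add: p_def rc_sum_monom cm(2) e)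
    have "poly (rc p) (z 0) = 0" using f pv by simp
    moreover have "poly (rc P) (z 0) = 0" using zr n1 by simp
    ultimately have "P dvd p" using irr_dvd[OF irr] by blast
    then obtain q where "p = P * q" by (auto elim: dvdE)
    then have "poly (rc p) w = 0" using w by (simp add: rc_mult)
    then show "f (\<lambda>_. w) = 0" using pv by simp
  qed
  have "\<forall>k. 1 \<le> k \<longrightarrow> k \<le> n \<longrightarrow> (\<exists>y. y 0 = w \<and> spec k z y)"
  proof (intro allI)
    fix k show "1 \<le> k \<longrightarrow> k \<le> n \<longrightarrow> (\<exists>y. y 0 = w \<and> spec k z y)"
    proof (induction k)
      case 0 then show ?case by simp
    next
      case (Suc k)
      show ?case
      proof (intro impI)
        assume h: "1 \<le> Suc k" "Suc k \<le> n"
        show "\<exists>y. y 0 = w \<and> spec (Suc k) z y"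
        proof (cases "k = 0")
          case True then show ?thesis using base by auto
        next
          case False
          then obtain y where y: "y 0 = w" "spec k z y" using Suc h by auto
          have "poly (rc P) (z k) = 0" using zr h by simp
          then obtain \<beta> where "spec (Suc k) z (y(k := \<beta>))"
            using step_lemma[OF normQ Q0 y(2)] by blast
          moreover have "(y(k := \<beta>)) 0 = w" using y False by simp
          ultimately show ?thesis by blast
        qed
      qed
    qed
  qed
  then show ?thesis using n1 by blast
qed

lemma coeff_prod_linear_bound:
  fixes b :: "'a \<Rightarrow> complex"
  assumes "finite S" "\<forall>s\<in>S. cmod (b s) \<le> 1"
  shows "cmod (coeff (\<Prod>s\<in>S. [:- b s, 1:]) j) \<le> 2 ^ card S"
  using assms
proof (induction S arbitrary: j rule: finite_induct)
  case empty
  then show ?case by (cases j) auto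
next
  case (insert x S)
  define p where "p = (\<Prod>s\<in>S. [:- b s, 1:])"
  have IH: "cmod (coeff p i) \<le> 2 ^ card S" for i using insert by (simp add: p_def)
  have "(\<Prod>s\<in>insert x S. [:- b s, 1:]) = [:- b x, 1:] * p"
    using insert by (simp add: p_def)
  also have "\<dots> = Polynomial.smult (- b x) p + pCons 0 p"
    by (simp add: mult_pCons_left)
  finally have e: "coeff (\<Prod>s\<in>insert x S. [:- b s, 1:]) j = - b x * coeff p j + coeff (pCons 0 p) j"
    by simp
  have c1: "cmod (- b x * coeff p j) \<le> 2 ^ card S"
  proof -
    have "cmod (- b x * coeff p j) = cmod (b x) * cmod (coeff p j)" by (simp add: norm_mult)
    also have "\<dots> \<le> 1 * 2 ^ card S"
      using insert.prems IH[of j] by (intro mult_mono) auto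
    finally show ?thesis by simp
  qed
  have c2: "cmod (coeff (pCons 0 p) j) \<le> 2 ^ card S"
    using IH by (cases j) auto
  have "cmod (coeff (\<Prod>s\<in>insert x S. [:- b s, 1:]) j) \<le> 2 ^ card S + 2 ^ card S"
    unfolding e using c1 c2 norm_triangle_le by (smt (verit) norm_triangle_ineq)
  then show ?case using insert by simp
qed

lemma kronecker:
  fixes Q :: "complex poly"
  assumes normQ: "\<And>m. \<exists>g\<in>PF m. \<forall>a. g a = (\<Prod>r\<in>{x. poly Q x = 0}. \<Sum>k<m. a k * r ^ k)"
    and Q0: "Q \<noteq> 0" and circ: "\<forall>r. poly Q r = 0 \<longrightarrow> cmod r = 1" and z: "poly Q z = 0"
  shows "\<exists>k>0. z ^ k = 1"
proof -
  define R where "R = {x. poly Q x = 0}"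
  have finR: "finite R" unfolding R_def using poly_roots_finite[OF Q0] .
  define D where "D = card R"
  define E where "E = (\<lambda>k. \<Prod>r\<in>R. [:- (r ^ k), 1:])"
  have polyE: "poly (E k) t = (\<Prod>r\<in>R. t - r ^ k)" for k t by (simp add: E_def poly_prod)
  have intE: "\<exists>e::nat \<Rightarrow> int. \<forall>j. coeff (E k) j = of_int (e j)" if k1: "k \<ge> 1" for k
  proof -
    obtain g where g: "g \<in> PF (Suc k)" "\<forall>a. g a = (\<Prod>r\<in>R. \<Sum>j<Suc k. a j * r ^ j)"
      using normQ[of "Suc k"] unfolding R_def by blast
    define hh where "hh = (\<lambda>j (v::nat \<Rightarrow> complex). if j = 0 then v 0 else if j = k then -1 else (0::complex))"
    have hh: "hh j \<in> PF 1" for j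
    proof (cases "j = 0")
      case True
      then show ?thesis using PF.PF_var[of 0 1] by (simp add: hh_def)
    next
      case False
      show ?thesis
      proof (cases "j = k")
        case True
        then show ?thesis using False PF.PF_const[of "-1" 1] by (simp add: hh_def)
      next
        case False2: False
        then show ?thesis using False PF_0c[of 1] by (simp add: hh_def)
      qed
    qed
    define H where "H = (\<lambda>v. g (\<lambda>j. hh j v))"
    have HPF: "H \<in> PF 1" unfolding H_def by (rule PF_subst[OF g(1)]) (use hh in auto)
    have sumj: "(\<Sum>j<Suc k. hh j v * r ^ j) = v 0 - r ^ k" for v r
    proof -
      have "(\<Sum>j<Suc k. hh j v * r ^ j) = (\<Sum>j<k. hh j v * r ^ j) + hh k v * r ^ k" by simp
      also have "(\<Sum>j<k. hh j v * r ^ j) = (\<Sum>j<k. if j = 0 then v 0 else 0)"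
        by (rule sum.cong) (auto simp: hh_def)
      also have "\<dots> = v 0" using k1 by (simp add: sum.delta')
      finally show ?thesis using k1 by (simp add: hh_def)
    qed
    have Hv: "H v = (\<Prod>r\<in>R. v 0 - r ^ k)" for v by (simp only: H_def g(2) sumj)
    obtain c M where cM: "\<forall>j. c j \<in> PF 0" "\<forall>v. H v = (\<Sum>j<M. c j v * v 0 ^ j)"
      using PF_repr[of H 0] HPF by auto
    have "\<forall>j. \<exists>e::int. \<forall>v. c j v = of_int e" using cM(1) PF_zero_const by blast
    then obtain e where e: "\<And>j v. c j v = of_int (e j)" by metis
    define Pe where "Pe = (\<Sum>j<M. monom (of_int (e j) :: complex) j)"
    have "poly (E k) t = poly Pe t" for t
      using cM(2)[rule_format, of "\<lambda>_. t"] Hv[of "\<lambda>_. t"]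
      by (simp add: polyE Pe_def poly_sum poly_monom e)
    then have "E k = Pe" using poly_eq_poly_eq_iff by blast
    then have "coeff (E k) j = of_int (if j < M then e j else 0)" for j
      by (simp add: Pe_def coeff_sum coeff_monom)
    then show ?thesis by (intro exI[of _ "\<lambda>j. if j < M then e j else 0"]) blast
  qed
  have boundE: "cmod (coeff (E k) j) \<le> 2 ^ D" for k j
    unfolding E_def D_def using finR circ
    by (intro coeff_prod_linear_bound) (auto simp: R_def norm_power)
  have degE: "degree (E k) \<le> D" for k
  proof -
    have "degree (E k) \<le> sum (degree \<circ> (\<lambda>r. [:- (r ^ k), 1:])) R"
      unfolding E_def by (rule degree_prod_sum_le[OF finR])
    also have "\<dots> = D" by (simp add: D_def)
    finally show ?thesis .
  qed
  have E0: "E k \<noteq> 0" for k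
    unfolding E_def using finR by (simp add: prod_zero_iff)
  define FS where "FS = (\<lambda>c. \<Sum>j\<le>D. monom (of_int (c j) :: complex) j) ` (PiE {..D} (\<lambda>_. {-(2^D)..2^D}))"
  have finFS: "finite FS" unfolding FS_def by (intro finite_imageI finite_PiE) auto
  have EFS: "E k \<in> FS" if k1: "k \<ge> 1" for k
  proof -
    obtain e where e: "\<forall>j. coeff (E k) j = of_int (e j)" using intE[OF k1] by blast
    have eb: "e j \<in> {-(2^D)..2^D}" for j
    proof -
      have "cmod (of_int (e j)) \<le> 2 ^ D" using boundE[of k j] e by simp
      then have "real_of_int \<bar>e j\<bar> \<le> 2 ^ D" by simp
      then have "real_of_int \<bar>e j\<bar> \<le> real_of_int (2 ^ D)" by simp
      then have "\<bar>e j\<bar> \<le> 2 ^ D" by (simp only: of_int_le_iff)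
      then show ?thesis by auto
    qed
    have "E k = (\<Sum>j\<le>D. monom (coeff (E k) j) j)" using poly_as_sum_of_monoms'[OF degE[of k]] by simp
    also have "\<dots> = (\<Sum>j\<le>D. monom (of_int (restrict e {..D} j)) j)"
      by (rule sum.cong) (auto simp: e)
    finally show ?thesis unfolding FS_def using eb by (intro image_eqI[of _ _ "restrict e {..D}"]) auto
  qed
  define Big where "Big = (\<Union>p\<in>FS - {0}. {x. poly p x = 0})"
  have finBig: "finite Big" unfolding Big_def using finFS by (auto intro: poly_roots_finite)
  have zR: "z \<in> R" using z by (simp add: R_def)
  have "z ^ Suc k \<in> Big" for k
  proof -
    have "poly (E (Suc k)) (z ^ Suc k) = (\<Prod>r\<in>R. z ^ Suc k - r ^ Suc k)" by (rule polyE)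
    also have "\<dots> = 0" by (rule prod_zero[OF finR], rule bexI[OF _ zR]) simp
    finally have "poly (E (Suc k)) (z ^ Suc k) = 0" .
    moreover have "E (Suc k) \<in> FS - {0}" using EFS[of "Suc k"] E0[of "Suc k"] by simp
    ultimately show ?thesis unfolding Big_def by (intro UN_I[of "E (Suc k)"]) auto
  qed
  then have "range (\<lambda>k. z ^ Suc k) \<subseteq> Big" by auto
  then have "finite (range (\<lambda>k. z ^ Suc k))" using finBig finite_subset by blast
  then have "\<not> inj (\<lambda>k. z ^ Suc k)" using finite_imageD infinite_UNIV_nat by blast
  then obtain a b where ab: "a \<noteq> b" "z ^ Suc a = z ^ Suc b" unfolding inj_def by blast
  have z0: "z \<noteq> 0" using circ z by auto
  have "\<exists>k>0. z ^ k = 1" if "a < b" "z ^ Suc a = z ^ Suc b" for a b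
  proof -
    have "z ^ Suc b = z ^ Suc a * z ^ (b - a)" using that by (simp flip: power_add)
    then have "z ^ (b - a) = 1" using that z0 by simp
    then show ?thesis using that by (intro exI[of _ "b - a"]) auto
  qed
  then show ?thesis using ab by (metis linorder_neqE_nat)
qed

lemma off_sub:
  fixes Q :: "complex poly"
  assumes Q0: "Q \<noteq> 0" and W0: "0 \<notin> W" and rat: "\<forall>u\<in>W. \<forall>v\<in>W. u \<noteq> v \<longrightarrow> poly Q (u / v) = 0"
    and s: "s \<in> W" and X: "X \<subseteq> W" and finX: "finite X"
    and dir: "(\<forall>u\<in>X. cmod u < cmod s) \<or> (\<forall>u\<in>X. cmod u > cmod s)"
  shows "2 * card X \<le> card {x. poly Q x = 0 \<and> cmod x \<noteq> 1}"
proof -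
  define Off where "Off = {x. poly Q x = 0 \<and> cmod x \<noteq> 1}"
  have finO: "finite Off" unfolding Off_def using poly_roots_finite[OF Q0] by (rule finite_subset[rotated]) auto
  have s0: "s \<noteq> 0" using s W0 by auto
  have u0: "u \<noteq> 0" if "u \<in> X" for u using that X W0 by auto
  have neq: "cmod u \<noteq> cmod s" if "u \<in> X" for u using dir that by auto
  have us: "u \<noteq> s" if "u \<in> X" for u using neq[OF that] by auto
  define f1 where "f1 = (\<lambda>u. s / u)"
  define f2 where "f2 = (\<lambda>u. u / s)"
  have inj1: "inj_on f1 X" unfolding f1_def inj_on_def using s0 u0 by (auto simp: field_simps)
  have inj2: "inj_on f2 X" unfolding f2_def inj_on_def using s0 by (auto simp: field_simps)
  have m1: "cmod (f1 u) = cmod s / cmod u" for u by (simp add: f1_def norm_divide)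
  have m2: "cmod (f2 u) = cmod u / cmod s" for u by (simp add: f2_def norm_divide)
  have pos: "cmod u > 0" if "u \<in> X" for u using u0[OF that] by simp
  have spos: "cmod s > 0" using s0 by simp
  have f1O: "f1 ` X \<subseteq> Off"
  proof
    fix x assume "x \<in> f1 ` X"
    then obtain u where u: "u \<in> X" "x = f1 u" by auto
    have "poly Q x = 0" using rat s X u us[OF u(1)] by (auto simp: f1_def)
    moreover have "cmod x \<noteq> 1" using m1 u neq[OF u(1)] pos[OF u(1)] by (auto simp: field_simps)
    ultimately show "x \<in> Off" by (simp add: Off_def)
  qed
  have f2O: "f2 ` X \<subseteq> Off"
  proof
    fix x assume "x \<in> f2 ` X"
    then obtain u where u: "u \<in> X" "x = f2 u" by auto
    have "poly Q x = 0" using rat s X u us[OF u(1)] by (auto simp: f2_def)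
    moreover have "cmod x \<noteq> 1"
    proof
      assume "cmod x = 1"
      then have "cmod u / cmod s = 1" using m2[of u] u(2) by metis
      then have "cmod u = cmod s" using spos by (metis divide_eq_1_iff)
      then show False using neq[OF u(1)] by simp
    qed
    ultimately show "x \<in> Off" by (simp add: Off_def)
  qed
  have disj: "f1 ` X \<inter> f2 ` X = {}"
  proof (rule ccontr)
    assume "f1 ` X \<inter> f2 ` X \<noteq> {}"
    then obtain u u' where uu: "u \<in> X" "u' \<in> X" "f1 u = f2 u'" by auto
    then have "cmod s / cmod u = cmod u' / cmod s" using m1 m2 by metis
    moreover have "cmod s / cmod u > 1 \<longleftrightarrow> cmod u < cmod s" using pos[OF uu(1)] by (simp add: field_simps)
    moreover have "cmod u' / cmod s > 1 \<longleftrightarrow> cmod u' > cmod s" using spos by (simp add: field_simps)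
    moreover have "cmod s / cmod u < 1 \<longleftrightarrow> cmod u > cmod s" using pos[OF uu(1)] by (simp add: field_simps)
    moreover have "cmod u' / cmod s < 1 \<longleftrightarrow> cmod u' < cmod s" using spos by (simp add: field_simps)
    ultimately show False using dir uu by force
  qed
  have "card (f1 ` X \<union> f2 ` X) = card (f1 ` X) + card (f2 ` X)"
    using disj finX by (intro card_Un_disjoint) auto
  also have "\<dots> = 2 * card X" using card_image[OF inj1] card_image[OF inj2] by simp
  finally have "2 * card X = card (f1 ` X \<union> f2 ` X)" by simp
  also have "\<dots> \<le> card Off" using f1O f2O finO by (intro card_mono) auto
  finally show ?thesis by (simp add: Off_def)
qed

lemma offcount:
  fixes Q :: "complex poly" and W :: "complex set"
  assumes Q0: "Q \<noteq> 0" and finW: "finite W" and W0: "0 \<notin> W"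
    and rat: "\<forall>u\<in>W. \<forall>v\<in>W. u \<noteq> v \<longrightarrow> poly Q (u / v) = 0"
    and one: "1 \<in> W" and w: "w \<in> W" "cmod w \<noteq> 1"
  shows "card W \<le> card {x. poly Q x = 0 \<and> cmod x \<noteq> 1}"
proof -
  define M where "M = Max (cmod ` W)"
  define m where "m = Min (cmod ` W)"
  define S where "S = {u\<in>W. cmod u = M}"
  define T where "T = {u\<in>W. cmod u = m}"
  have Wne: "W \<noteq> {}" using one by auto
  have "M \<in> cmod ` W" unfolding M_def using finW Wne by (intro Max_in) auto
  then obtain s where s: "s \<in> W" "cmod s = M" by auto
  have "m \<in> cmod ` W" unfolding m_def using finW Wne by (intro Min_in) auto
  then obtain t where t: "t \<in> W" "cmod t = m" by auto
  have leM: "cmod u \<le> M" if "u \<in> W" for u using that finW unfolding M_def by auto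
  have gem: "cmod u \<ge> m" if "u \<in> W" for u using that finW unfolding m_def by auto
  have mM: "m < M"
  proof -
    have "m \<le> cmod (1::complex)" "cmod (1::complex) \<le> M" "m \<le> cmod w" "cmod w \<le> M"
      using leM[OF one] gem[OF one] leM[OF w(1)] gem[OF w(1)] by auto
    then show ?thesis using w(2) by auto
  qed
  have ST: "S \<inter> T = {}" using mM by (auto simp: S_def T_def)
  have "card S + card T = card (S \<union> T)"
    using ST finW by (intro card_Un_disjoint[symmetric]) (auto simp: S_def T_def)
  also have "\<dots> \<le> card W" using finW by (intro card_mono) (auto simp: S_def T_def)
  finally have cST: "card S + card T \<le> card W" .
  show ?thesis
  proof (cases "2 * card S \<le> card W")
    case True
    have "2 * card (W - S) \<le> card {x. poly Q x = 0 \<and> cmod x \<noteq> 1}"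
    proof (rule off_sub[OF Q0 W0 rat s(1)])
      show "(\<forall>u\<in>W - S. cmod u < cmod s) \<or> (\<forall>u\<in>W - S. cmod s < cmod u)"
        using leM s by (auto simp: S_def less_le)
    qed (use finW in auto)
    moreover have "card (W - S) = card W - card S"
      using finW by (intro card_Diff_subset) (auto simp: S_def)
    moreover have "card S \<le> card W" using finW by (intro card_mono) (auto simp: S_def)
    ultimately show ?thesis using True by linarith
  next
    case False
    then have True': "2 * card T \<le> card W" using cST by linarith
    have "2 * card (W - T) \<le> card {x. poly Q x = 0 \<and> cmod x \<noteq> 1}"
    proof (rule off_sub[OF Q0 W0 rat t(1)])
      show "(\<forall>u\<in>W - T. cmod u < cmod t) \<or> (\<forall>u\<in>W - T. cmod t < cmod u)"
        using gem t by (auto simp: T_def less_le)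
    qed (use finW in auto)
    moreover have "card (W - T) = card W - card T"
      using finW by (intro card_Diff_subset) (auto simp: T_def)
    moreover have "card T \<le> card W" using finW by (intro card_mono) (auto simp: T_def)
    ultimately show ?thesis using True' by linarith
  qed
qed

lemma psi_exists:
  fixes \<Psi> :: "(nat \<Rightarrow> real) set"
  assumes sep: "\<forall>i<N. \<forall>j<N. i \<noteq> j \<longrightarrow> (\<exists>\<psi>\<in>\<Psi>. \<psi> i \<noteq> \<psi> j)"
    and closed: "\<forall>\<psi>\<in>\<Psi>. \<forall>\<phi>\<in>\<Psi>. \<forall>c::real. (\<lambda>k. \<psi> k + c * \<phi> k) \<in> \<Psi>"
    and zero: "(\<lambda>_. 0) \<in> \<Psi>"
  shows "\<exists>\<psi>\<in>\<Psi>. inj_on \<psi> {..<N}"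
proof -
  define AP where "AP = {(i, j). i < N \<and> j < N \<and> i \<noteq> j}"
  have finAP: "finite AP" unfolding AP_def
    by (rule finite_subset[of _ "{..<N} \<times> {..<N}"]) auto
  have "\<forall>Pr. Pr \<subseteq> AP \<longrightarrow> (\<exists>\<psi>\<in>\<Psi>. \<forall>(i, j)\<in>Pr. \<psi> i \<noteq> \<psi> j)"
  proof (intro allI impI)
    fix Pr assume "Pr \<subseteq> AP"
    then have "finite Pr" using finAP finite_subset by blast
    then show "\<exists>\<psi>\<in>\<Psi>. \<forall>(i, j)\<in>Pr. \<psi> i \<noteq> \<psi> j" using \<open>Pr \<subseteq> AP\<close>
    proof (induction Pr rule: finite_induct)
      case empty
      then show ?case using zero by blast
    next
      case (insert p Pr)
      obtain i j where p: "p = (i, j)" by (cases p)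
      have ij: "i < N" "j < N" "i \<noteq> j" using insert.prems p by (auto simp: AP_def)
      obtain \<psi> where \<psi>: "\<psi> \<in> \<Psi>" "\<forall>(a, b)\<in>Pr. \<psi> a \<noteq> \<psi> b" using insert by auto
      obtain \<phi> where \<phi>: "\<phi> \<in> \<Psi>" "\<phi> i \<noteq> \<phi> j" using sep ij by blast
      define bad where "bad = (\<lambda>(a, b). (\<psi> b - \<psi> a) / (\<phi> a - \<phi> b)) ` insert p Pr"
      have "finite bad" using insert.hyps by (simp add: bad_def)
      then obtain c where c: "c \<notin> bad" using ex_new_if_finite[OF infinite_UNIV_char_0] by blast
      define chi where "chi = (\<lambda>k. \<psi> k + c * \<phi> k)"
      have "chi \<in> \<Psi>" using closed \<psi> \<phi> by (simp add: chi_def)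
      moreover have "chi a \<noteq> chi b" if ab: "(a, b) \<in> insert p Pr" for a b
      proof
        assume eq: "chi a = chi b"
        show False
        proof (cases "\<phi> a = \<phi> b")
          case True
          then have "(a, b) \<noteq> p" using \<phi> p by auto
          then have "(a, b) \<in> Pr" using ab by auto
          then show False using \<psi> eq True by (auto simp: chi_def)
        next
          case False
          then have "c = (\<psi> b - \<psi> a) / (\<phi> a - \<phi> b)" using eq
            by (simp add: chi_def field_simps)
          then have "c \<in> bad" using ab unfolding bad_def by force
          then show False using c by simp
        qed
      qed
      ultimately show ?case by blast
    qed
  qed
  then obtain \<psi> where \<psi>: "\<psi> \<in> \<Psi>" "\<forall>(i, j)\<in>AP. \<psi> i \<noteq> \<psi> j" by blast
  have "inj_on \<psi> {..<N}" unfolding inj_on_def using \<psi>(2) by (auto simp: AP_def)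
  then show ?thesis using \<psi>(1) by blast
qed

lemma oncount:
  fixes Q :: "complex poly" and sp :: "nat \<Rightarrow> complex" and \<psi> :: "nat \<Rightarrow> real"
  assumes Q0: "Q \<noteq> 0" and N1: "N \<ge> 1"
    and roots: "\<forall>i<N. \<forall>j<N. i \<noteq> j \<longrightarrow> poly Q (sp i / sp j) = 0"
    and unit: "\<forall>i<N. cmod (sp i) = 1" and injsp: "inj_on sp {..<N}"
    and rel: "\<forall>a b c e. a < N \<longrightarrow> b < N \<longrightarrow> c < N \<longrightarrow> e < N \<longrightarrow> sp a * sp e = sp b * sp c \<longrightarrow> \<psi> a + \<psi> e = \<psi> b + \<psi> c"
    and injpsi: "inj_on \<psi> {..<N}"
  shows "2 * (N - 1) \<le> card {x. poly Q x = 0 \<and> cmod x = 1}"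
proof -
  define U where "U = {x. poly Q x = 0 \<and> cmod x = 1}"
  have finU: "finite U" unfolding U_def using poly_roots_finite[OF Q0] by (rule finite_subset[rotated]) auto
  have "0 \<in> {..<N}" using N1 by simp
  then have ne: "{..<N} \<noteq> {}" by auto
  obtain q where q: "q < N" "\<forall>b<N. \<psi> b \<le> \<psi> q"
  proof -
    obtain x where "x \<in> \<psi> ` {..<N}" "x = Max (\<psi> ` {..<N})" using Max_in[of "\<psi> ` {..<N}"] ne by auto
    then obtain q where "q < N" "\<psi> q = Max (\<psi> ` {..<N})" by auto
    then show ?thesis using that by (metis Max_ge finite_imageI finite_lessThan imageI lessThan_iff)
  qed
  have lt: "\<psi> b < \<psi> q" if "b < N" "b \<noteq> q" for b
    using q that injpsi by (metis inj_on_def lessThan_iff order_le_less)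
  have sp0: "sp i \<noteq> 0" if "i < N" for i using unit that by auto
  define B where "B = {..<N} - {q}"
  have finB: "finite B" by (simp add: B_def)
  have cardB: "card B = N - 1" using q by (simp add: B_def)
  define f1 where "f1 = (\<lambda>b. sp q / sp b)"
  define f2 where "f2 = (\<lambda>b. sp b / sp q)"
  have inj1: "inj_on f1 B"
    unfolding inj_on_def f1_def B_def using sp0 q injsp
    by (auto simp: field_simps inj_on_def)
  have inj2: "inj_on f2 B"
    unfolding inj_on_def f2_def B_def using sp0 q injsp
    by (auto simp: field_simps inj_on_def)
  have f1U: "f1 ` B \<subseteq> U"
    using roots unit q sp0 by (auto simp: f1_def U_def B_def norm_divide)
  have f2U: "f2 ` B \<subseteq> U"
    using roots unit q sp0 by (auto simp: f2_def U_def B_def norm_divide)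
  have disj: "f1 ` B \<inter> f2 ` B = {}"
  proof (rule ccontr)
    assume "f1 ` B \<inter> f2 ` B \<noteq> {}"
    then obtain b c where bc: "b \<in> B" "c \<in> B" "f1 b = f2 c" by auto
    have bN: "b < N" "c < N" using bc by (auto simp: B_def)
    have "sp q * sp q = sp b * sp c" using bc(3) sp0[OF q(1)] sp0[OF bN(1)] sp0[OF bN(2)]
      by (simp add: f1_def f2_def field_simps)
    then have "\<psi> q + \<psi> q = \<psi> b + \<psi> c" using rel[rule_format, OF q(1) bN(1) bN(2) q(1)] by simp
    moreover have "\<psi> b < \<psi> q" "\<psi> c < \<psi> q" using lt bc by (auto simp: B_def)
    ultimately show False by simp
  qed
  have "2 * (N - 1) = card (f1 ` B) + card (f2 ` B)"
    using card_image[OF inj1] card_image[OF inj2] cardB by simp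
  also have "\<dots> = card (f1 ` B \<union> f2 ` B)"
    using disj finB by (intro card_Un_disjoint[symmetric]) auto
  also have "\<dots> \<le> card U" using f1U f2U finU by (intro card_mono) auto
  finally show ?thesis by (simp add: U_def)
qed

lemma mask_coeff: "finite A \<Longrightarrow> coeff (mask_poly A) k = (if k \<in> A then 1 else 0)"
  by (simp add: mask_poly_def coeff_sum coeff_monom)

lemma mask_rc: "finite A \<Longrightarrow> rc (mask_poly A) = (\<Sum>a\<in>A. monom 1 a)"
  by (intro poly_eqI) (simp add: coeff_map_poly mask_coeff coeff_sum coeff_monom)

lemma mask_eval: "finite A \<Longrightarrow> poly (rc (mask_poly A)) x = (\<Sum>a\<in>A. x ^ a)"
  by (simp add: mask_rc poly_sum poly_monom)

lemma mask_degree: "finite A \<Longrightarrow> A \<noteq> {} \<Longrightarrow> degree (mask_poly A) = Max A"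
proof (rule antisym)
  assume A: "finite A" "A \<noteq> {}"
  show "degree (mask_poly A) \<le> Max A"
    by (rule degree_le) (use A in \<open>auto simp: mask_coeff\<close>)
  show "Max A \<le> degree (mask_poly A)"
    by (rule le_degree) (use A in \<open>simp add: mask_coeff\<close>)
qed

lemma homog:
  fixes x y0 :: complex
  assumes "\<forall>s\<in>A. s \<le> d" "y0 \<noteq> 0"
  shows "(\<Sum>s\<in>A. x ^ s * y0 ^ (d - s)) = y0 ^ d * (\<Sum>s\<in>A. (x / y0) ^ s)"
  unfolding sum_distrib_left
proof (rule sum.cong[OF refl])
  fix s assume "s \<in> A"
  then have "d = s + (d - s)" using assms by auto
  then have "y0 ^ d = y0 ^ s * y0 ^ (d - s)" by (metis power_add)
  then show "x ^ s * y0 ^ (d - s) = y0 ^ d * (x / y0) ^ s"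
    using assms by (simp add: power_divide field_simps)
qed


theorem mainTheorem12:
  fixes A :: "nat set" and N :: nat and \<theta> :: "nat \<Rightarrow> real"
  assumes "finite A" and "0 \<in> A" and "N = card A" and "N \<ge> 2"
    and "irreducible (mask_poly A)"
    and "is_spectrum (mask_poly A) N \<theta>"
    and "\<theta> 1 \<notin> \<rat>"
  shows "card {x::complex. poly (map_poly of_rat (mask_poly A)) x = 0 \<and> cmod x \<noteq> 1} \<ge> N
         \<and> real (degree (mask_poly A)) \<ge> 5 * real N / 2"
proof -
  note finA = assms(1) and A0 = assms(2) and NA = assms(3) and N2 = assms(4)
    and irr = assms(5) and spec = assms(6) and irrat = assms(7)
  define P where "P = mask_poly A"
  define Q where "Q = rc P"
  define d where "d = Max A"
  have Ane: "A \<noteq> {}" using A0 by auto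
  have coeffP: "coeff P k = (if k \<in> A then 1 else 0)" for k
    using mask_coeff[OF finA] by (simp add: P_def)
  have polyQ: "poly Q x = (\<Sum>a\<in>A. x ^ a)" for x
    using mask_eval[OF finA] by (simp add: Q_def P_def)
  have degP: "degree P = d" using mask_degree[OF finA Ane] by (simp add: P_def d_def)
  have degQ: "degree Q = d" using degP by (simp add: Q_def rc_degree)
  have dA: "d \<in> A" unfolding d_def using finA Ane by (rule Max_in)
  have sd: "\<forall>s\<in>A. s \<le> d" unfolding d_def using finA by auto
  have lcQ: "lead_coeff Q = 1" using degQ dA by (simp add: Q_def coeff_map_poly coeffP)
  have Q0: "Q \<noteq> 0" using lcQ by auto
  have "\<not> A \<subseteq> {0}"
  proof
    assume "A \<subseteq> {0}"
    then have "card A \<le> card {0::nat}" by (intro card_mono) auto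
    then show False using N2 NA by simp
  qed
  then obtain a1 where a1: "a1 \<in> A" "a1 \<noteq> 0" by auto
  have d1: "d \<ge> 1" using sd a1 by fastforce
  have irrP: "irreducible P" using irr by (simp add: P_def)
  have sq: "rsquarefree Q" unfolding Q_def by (rule irr_rsquarefree[OF irrP])
  have cardR: "card {x. poly Q x = 0} = d" using card_roots_rsquarefree[OF sq] degQ by simp
  have qc: "\<forall>k<d. coeff Q k = of_int (if k \<in> A then 1 else 0)"
    by (simp add: Q_def coeff_map_poly coeffP)
  have normQ: "\<And>m. \<exists>g\<in>PF m. \<forall>a. g a = (\<Prod>r\<in>{x. poly Q x = 0}. \<Sum>k<m. a k * r ^ k)"
    using norm_lemma[OF sq lcQ degQ d1 qc] by blast
  have Q1: "poly Q 1 = of_nat N" using NA by (simp add: polyQ)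
  have Q1ne: "poly Q 1 \<noteq> 0" using Q1 N2 by simp
  have Qz: "poly Q 0 = 1"
  proof -
    have "poly Q 0 = (\<Sum>a\<in>A. if a = 0 then 1 else 0)" by (simp add: polyQ power_0_left)
    also have "\<dots> = 1" using finA A0 by (simp add: sum.delta)
    finally show ?thesis .
  qed
  have rootne: "x \<noteq> 0" if "poly Q x = 0" for x using that Qz by auto
  define th where "th = \<theta>(0 := 0)"
  define sp where "sp = (\<lambda>k. exp (2 * of_real pi * \<i> * of_real (th k)))"
  have hsp: "\<forall>i<N. \<forall>j<N. i \<noteq> j \<longrightarrow>
      poly Q (exp (2 * of_real pi * \<i> * of_real (th i - th j))) = 0"
    using spec unfolding is_spectrum_def Let_def by (simp add: Q_def P_def th_def)
  have expd: "exp (2 * of_real pi * \<i> * of_real (u - v)) = exp (2 * of_real pi * \<i> * of_real u) / exp (2 * of_real pi * \<i> * of_real v)" for u v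
  proof -
    have "2 * of_real pi * \<i> * of_real (u - v) = 2 * of_real pi * \<i> * of_real u - 2 * of_real pi * \<i> * (of_real v :: complex)"
      by (simp add: algebra_simps)
    then show ?thesis by (simp add: exp_diff)
  qed
  have spr: "\<forall>i<N. \<forall>j<N. i \<noteq> j \<longrightarrow> poly Q (sp i / sp j) = 0"
    unfolding sp_def expd[symmetric] by (rule hsp)
  have sp0: "sp 0 = 1" by (simp add: sp_def th_def)
  have spn: "cmod (sp k) = 1" for k by (simp add: sp_def norm_exp_eq_Re)
  have spne: "sp k \<noteq> 0" for k by (simp add: sp_def)
  have injsp: "inj_on sp {..<N}"
  proof (rule inj_onI)
    fix i j assume ij: "i \<in> {..<N}" "j \<in> {..<N}" "sp i = sp j"
    show "i = j"
    proof (rule ccontr)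
      assume "i \<noteq> j"
      then have "poly Q (sp i / sp j) = 0" using spr ij by blast
      moreover have "sp i / sp j = 1" using ij(3) spne[of j] by simp
      ultimately show False using Q1ne by simp
    qed
  qed
  have rootsp: "poly Q (sp k) = 0" if "k < N" "k \<ge> 1" for k
    using spr[rule_format, of k 0] that sp0 by simp
  have N1: "1 < N" using N2 by simp
  have sp1root: "poly Q (sp 1) = 0" using rootsp[of 1] N1 by simp
  have nu: "sp 1 ^ k \<noteq> 1" if "k > 0" for k
  proof
    assume h: "sp 1 ^ k = 1"
    define z1 where "z1 = 2 * of_real pi * \<i> * (of_real (\<theta> 1) :: complex)"
    have "sp 1 = exp z1" by (simp add: sp_def th_def z1_def)
    then have "exp (of_nat k * z1) = 1" using h by (simp add: exp_of_nat_mult)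
    then obtain n where n: "Im (of_nat k * z1) = of_int (2 * n) * pi" using exp_eq_1 by blast
    have "of_nat k * z1 = Complex 0 (real k * 2 * pi * \<theta> 1)" by (simp add: z1_def complex_eq_iff)
    then have imk: "Im (of_nat k * z1) = real k * 2 * pi * \<theta> 1" by simp
    have e1: "real k * 2 * pi * \<theta> 1 = real_of_int (2 * n) * pi" using n imk by metis
    have "2 * pi * (real k * \<theta> 1 - real_of_int n) = 0" using e1 by (simp add: algebra_simps)
    then have "real k * \<theta> 1 = real_of_int n" using pi_gt_zero by simp
    then have "\<theta> 1 = real_of_int n / real k" using that by (simp add: field_simps)
    then have "\<theta> 1 \<in> \<rat>" by simp
    then show False using irrat by simp
  qed
  have recip: "poly Q (inverse x) = 0" if xr: "poly Q x = 0" for x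
  proof -
    have "poly (rc (reflect_poly P)) (sp 1) = sp 1 ^ degree Q * poly Q (inverse (sp 1))"
      by (simp add: rc_reflect Q_def poly_reflect_poly_nz spne)
    also have "inverse (sp 1) = sp 0 / sp 1" by (simp add: sp0 field_simps)
    also have "poly Q (sp 0 / sp 1) = 0" using spr N1 by auto
    finally have "poly (rc (reflect_poly P)) (sp 1) = 0" by simp
    then have "P dvd reflect_poly P"
      using irr_dvd[OF irrP, of "sp 1"] sp1root by (simp add: Q_def)
    then obtain q where q: "reflect_poly P = P * q" by (auto elim: dvdE)
    have "poly (reflect_poly Q) x = poly (rc (reflect_poly P)) x" by (simp add: Q_def rc_reflect)
    also have "\<dots> = 0" using xr by (simp add: q rc_mult Q_def)
    finally have "x ^ degree Q * poly Q (inverse x) = 0"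
      using rootne[OF xr] by (simp add: poly_reflect_poly_nz)
    then show ?thesis using rootne[OF xr] by simp
  qed
  have "\<exists>w. poly Q w = 0 \<and> cmod w \<noteq> 1"
  proof (rule ccontr)
    assume "\<not> ?thesis"
    then have circ: "\<forall>r. poly Q r = 0 \<longrightarrow> cmod r = 1" by auto
    obtain k where "k > 0" "sp 1 ^ k = 1" using kronecker[OF normQ Q0 circ sp1root] by blast
    then show False using nu by blast
  qed
  then obtain w where w: "poly Q w = 0" "cmod w \<noteq> 1" by blast
  define pt where "pt = (\<lambda>(v::nat \<Rightarrow> complex) k. if k = 0 then 1 else v k)"
  have ptPF: "(\<lambda>v. pt v k) \<in> PF N" if "k < N" for k
  proof (cases "k = 0")
    case True then show ?thesis using PF_1c by (simp add: pt_def)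
  next
    case False then show ?thesis using PF.PF_var[OF that] by (simp add: pt_def)
  qed
  have QP: "Q = rc P" by (simp add: Q_def)
  have conj: "\<exists>y. pt y a = w * pt y b \<and> (\<forall>k<N. pt y k \<noteq> 0)
      \<and> (\<forall>i<N. \<forall>j<N. i \<noteq> j \<longrightarrow> poly Q (pt y i / pt y j) = 0)
      \<and> (\<forall>a' b' c' e'. a' < N \<longrightarrow> b' < N \<longrightarrow> c' < N \<longrightarrow> e' < N \<longrightarrow>
            sp a' * sp e' = sp b' * sp c' \<longrightarrow> pt y a' * pt y e' = pt y b' * pt y c')"
    if ab: "a < N" "b < N" "a \<noteq> b" for a b
  proof -
    define zz where "zz = (\<lambda>k. if k = 0 then sp a / sp b else sp k)"
    have zzr: "poly (rc P) (zz i) = 0" if "i < N" for i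
    proof (cases "i = 0")
      case True then show ?thesis using spr ab by (simp add: zz_def QP[symmetric])
    next
      case False then show ?thesis using rootsp[OF that] by (simp add: zz_def QP[symmetric])
    qed
    have normP: "\<And>m. \<exists>g\<in>PF m. \<forall>a. g a = (\<Prod>r\<in>{x. poly (rc P) x = 0}. \<Sum>k<m. a k * r ^ k)"
      using normQ by (simp add: QP)
    obtain y where y: "y 0 = w" "spec N zz y"
      using lemmaG[where P=P and n=N and z=zz and w=w, OF irrP normP zzr] N1 w(1) by (auto simp: QP)
    have ptz: "pt zz k = sp k" for k by (simp add: pt_def zz_def sp0)
    have tr: "f y = 0" if "f \<in> PF N" "f zz = 0" for f using specD[OF y(2) that] .
    have rooty: "poly Q (pt y k) = 0" if "k < N" "k \<ge> 1" for k
    proof -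
      have "(\<lambda>v. \<Sum>s\<in>A. pt v k ^ s) \<in> PF N" using finA ptPF[OF that(1)] by (intro PF_sum PF_pow) auto
      moreover have "(\<Sum>s\<in>A. pt zz k ^ s) = 0" using rootsp[OF that] by (simp add: ptz polyQ)
      ultimately have "(\<Sum>s\<in>A. pt y k ^ s) = 0" using tr by blast
      then show ?thesis by (simp add: polyQ)
    qed
    have ptne: "pt y k \<noteq> 0" if "k < N" for k
    proof (cases "k = 0")
      case True then show ?thesis by (simp add: pt_def)
    next
      case False then show ?thesis using rooty[OF that] rootne by simp
    qed
    have ratio: "poly Q (pt y i / pt y j) = 0" if ij: "i < N" "j < N" "i \<noteq> j" for i j
    proof -
      define f where "f = (\<lambda>v. \<Sum>s\<in>A. pt v i ^ s * pt v j ^ (d - s))"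
      have "f \<in> PF N" unfolding f_def using finA ptPF ij by (intro PF_sum PF.PF_mult PF_pow) auto
      moreover have "f zz = 0"
      proof -
        have "f zz = sp j ^ d * (\<Sum>s\<in>A. (sp i / sp j) ^ s)"
          unfolding f_def ptz by (rule homog[OF sd spne])
        also have "\<dots> = 0" using spr ij by (simp add: polyQ[symmetric])
        finally show ?thesis .
      qed
      ultimately have "f y = 0" using tr by blast
      moreover have "f y = pt y j ^ d * poly Q (pt y i / pt y j)"
        unfolding f_def polyQ by (rule homog[OF sd ptne[OF ij(2)]])
      ultimately show ?thesis using ptne[OF ij(2)] by simp
    qed
    have rel: "pt y a' * pt y e' = pt y b' * pt y c'"
      if h: "a' < N" "b' < N" "c' < N" "e' < N" "sp a' * sp e' = sp b' * sp c'" for a' b' c' e'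
    proof -
      define f where "f = (\<lambda>v. pt v a' * pt v e' - pt v b' * pt v c')"
      have "f \<in> PF N" unfolding f_def using ptPF h by (intro PF_diff PF.PF_mult) auto
      moreover have "f zz = 0" using h(5) by (simp add: f_def ptz)
      ultimately have "f y = 0" using tr by blast
      then show ?thesis by (simp add: f_def)
    qed
    have mainrel: "pt y a = w * pt y b"
    proof -
      define f where "f = (\<lambda>v. v 0 * pt v b - pt v a)"
      have "f \<in> PF N" unfolding f_def using ptPF ab N1 by (intro PF_diff PF.PF_mult PF.PF_var) auto
      moreover have "f zz = 0"
      proof -
        have "f zz = zz 0 * sp b - sp a" by (simp only: f_def ptz)
        also have "\<dots> = 0" using spne[of b] by (simp add: zz_def)
        finally show ?thesis .
      qed
      ultimately have "f y = 0" using tr by blast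
      then show ?thesis using y(1) by (simp add: f_def)
    qed
    show ?thesis using mainrel ptne ratio rel by blast
  qed
  define Off where "Off = {x. poly Q x = 0 \<and> cmod x \<noteq> 1}"
  have part1: "N \<le> card Off"
  proof -
    obtain y where y: "pt y 1 = w * pt y 0" "\<forall>k<N. pt y k \<noteq> 0"
        "\<forall>i<N. \<forall>j<N. i \<noteq> j \<longrightarrow> poly Q (pt y i / pt y j) = 0"
      using conj[of 1 0] N1 by auto
    define W where "W = (\<lambda>k. pt y k) ` {..<N}"
    have inj: "inj_on (\<lambda>k. pt y k) {..<N}"
    proof (rule inj_onI)
      fix i j assume ij: "i \<in> {..<N}" "j \<in> {..<N}" "pt y i = pt y j"
      show "i = j"
      proof (rule ccontr)
        assume "i \<noteq> j"
        then have "poly Q (pt y i / pt y j) = 0" using y(3) ij by blast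
        moreover have "pt y i / pt y j = 1" using ij y(2) by simp
        ultimately show False using Q1ne by simp
      qed
    qed
    have cW: "card W = N" unfolding W_def using card_image[OF inj] by simp
    have "card W \<le> card Off" unfolding Off_def
    proof (rule offcount[OF Q0])
      show "finite W" by (simp add: W_def)
      show "0 \<notin> W" using y(2) by (auto simp: W_def)
      show "\<forall>u\<in>W. \<forall>v\<in>W. u \<noteq> v \<longrightarrow> poly Q (u / v) = 0" using y(3) by (auto simp: W_def)
      show "1 \<in> W" unfolding W_def using N1 by (intro image_eqI[of _ _ 0]) (auto simp: pt_def)
      show "w \<in> W" unfolding W_def using N1 y(1) by (intro image_eqI[of _ _ 1]) (auto simp: pt_def)
      show "cmod w \<noteq> 1" by (rule w(2))
    qed
    then show ?thesis using cW by simp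
  qed
  define U where "U = {x. poly Q x = 0 \<and> cmod x = 1}"
  define Psi where "Psi = {\<psi> :: nat \<Rightarrow> real. \<forall>a b c e. a < N \<longrightarrow> b < N \<longrightarrow> c < N \<longrightarrow> e < N \<longrightarrow>
      sp a * sp e = sp b * sp c \<longrightarrow> \<psi> a + \<psi> e = \<psi> b + \<psi> c}"
  have sep: "\<forall>i<N. \<forall>j<N. i \<noteq> j \<longrightarrow> (\<exists>\<psi>\<in>Psi. \<psi> i \<noteq> \<psi> j)"
  proof (intro allI impI)
    fix i j assume ij: "i < N" "j < N" "i \<noteq> j"
    from conj[OF ij] obtain y where y1: "pt y i = w * pt y j" and y2: "\<forall>k<N. pt y k \<noteq> 0"
      and y3: "\<forall>a' b' c' e'. a' < N \<longrightarrow> b' < N \<longrightarrow> c' < N \<longrightarrow> e' < N \<longrightarrow>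
            sp a' * sp e' = sp b' * sp c' \<longrightarrow> pt y a' * pt y e' = pt y b' * pt y c'"
      by (elim exE conjE)
    define \<psi> where "\<psi> = (\<lambda>k. ln (cmod (pt y k)))"
    have pos: "cmod (pt y k) > 0" if "k < N" for k using y2 that by simp
    have "\<psi> \<in> Psi" unfolding Psi_def
    proof (intro CollectI allI impI)
      fix a b c e assume h: "a < N" "b < N" "c < N" "e < N" "sp a * sp e = sp b * sp c"
      have "pt y a * pt y e = pt y b * pt y c" using y3 h by blast
      then have "cmod (pt y a) * cmod (pt y e) = cmod (pt y b) * cmod (pt y c)" by (metis norm_mult)
      then have "ln (cmod (pt y a) * cmod (pt y e)) = ln (cmod (pt y b) * cmod (pt y c))" by simp
      moreover have "ln (cmod (pt y a) * cmod (pt y e)) = \<psi> a + \<psi> e"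
        unfolding \<psi>_def using pos[OF h(1)] pos[OF h(4)] by (simp add: ln_mult)
      moreover have "ln (cmod (pt y b) * cmod (pt y c)) = \<psi> b + \<psi> c"
        unfolding \<psi>_def using pos[OF h(2)] pos[OF h(3)] by (simp add: ln_mult)
      ultimately show "\<psi> a + \<psi> e = \<psi> b + \<psi> c" by simp
    qed
    moreover have "\<psi> i \<noteq> \<psi> j"
    proof
      assume "\<psi> i = \<psi> j"
      then have "cmod (pt y i) = cmod (pt y j)"
        unfolding \<psi>_def using ln_inj_iff[OF pos[OF ij(1)] pos[OF ij(2)]] by simp
      moreover have "cmod (pt y i) = cmod w * cmod (pt y j)" using y1 by (simp add: norm_mult)
      ultimately have "cmod w * cmod (pt y j) = 1 * cmod (pt y j)" by simp
      then have "cmod w = 1" using pos[OF ij(2)] by (metis mult_right_cancel less_irrefl)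
      then show False using w(2) by simp
    qed
    ultimately show "\<exists>\<psi>\<in>Psi. \<psi> i \<noteq> \<psi> j" by blast
  qed
  have closed: "\<forall>\<psi>\<in>Psi. \<forall>\<phi>\<in>Psi. \<forall>c::real. (\<lambda>k. \<psi> k + c * \<phi> k) \<in> Psi"
  proof (intro ballI allI)
    fix \<psi> \<phi> c assume h: "\<psi> \<in> Psi" "\<phi> \<in> Psi"
    show "(\<lambda>k. \<psi> k + c * \<phi> k) \<in> Psi" unfolding Psi_def
    proof (intro CollectI allI impI)
      fix a b c' e assume hh: "a < N" "b < N" "c' < N" "e < N" "sp a * sp e = sp b * sp c'"
      have "\<psi> a + \<psi> e = \<psi> b + \<psi> c'" using h(1) hh unfolding Psi_def by blast
      moreover have "\<phi> a + \<phi> e = \<phi> b + \<phi> c'" using h(2) hh unfolding Psi_def by blast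
      ultimately show "\<psi> a + c * \<phi> a + (\<psi> e + c * \<phi> e) = \<psi> b + c * \<phi> b + (\<psi> c' + c * \<phi> c')"
        by (metis (no_types, lifting) add.assoc add.commute distrib_left)
    qed
  qed
  have zero: "(\<lambda>_. 0) \<in> Psi" by (simp add: Psi_def)
  obtain \<psi> where \<psi>: "\<psi> \<in> Psi" "inj_on \<psi> {..<N}" using psi_exists[OF sep closed zero] by blast
  have part2: "2 * (N - 1) \<le> card U" unfolding U_def
  proof (rule oncount[OF Q0 _ spr _ injsp _ \<psi>(2)])
    show "1 \<le> N" using N1 by simp
    show "\<forall>i<N. cmod (sp i) = 1" using spn by simp
    show "\<forall>a b c e. a < N \<longrightarrow> b < N \<longrightarrow> c < N \<longrightarrow> e < N \<longrightarrow> sp a * sp e = sp b * sp c \<longrightarrow> \<psi> a + \<psi> e = \<psi> b + \<psi> c"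
      using \<psi>(1) unfolding Psi_def by blast
  qed
  define Og where "Og = {x. poly Q x = 0 \<and> cmod x > 1}"
  define Ol where "Ol = {x. poly Q x = 0 \<and> cmod x < 1}"
  have finRt: "finite {x. poly Q x = 0}" using poly_roots_finite[OF Q0] .
  have finOg: "finite Og" unfolding Og_def by (rule finite_subset[OF _ finRt]) auto
  have finOl: "finite Ol" unfolding Ol_def by (rule finite_subset[OF _ finRt]) auto
  have OffU: "Off = Og \<union> Ol" by (auto simp: Off_def Og_def Ol_def)
  have disjO: "Og \<inter> Ol = {}" by (auto simp: Og_def Ol_def)
  have "inverse ` Og = Ol"
  proof
    show "inverse ` Og \<subseteq> Ol"
    proof
      fix x assume "x \<in> inverse ` Og"
      then obtain u where u: "u \<in> Og" "x = inverse u" by auto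
      then have "poly Q x = 0" using recip by (simp add: Og_def)
      moreover have "cmod x < 1" using u by (simp add: Og_def norm_inverse inverse_less_1_iff)
      ultimately show "x \<in> Ol" by (simp add: Ol_def)
    qed
    show "Ol \<subseteq> inverse ` Og"
    proof
      fix x assume x: "x \<in> Ol"
      then have x0: "x \<noteq> 0" using rootne by (simp add: Ol_def)
      have "inverse x \<in> Og"
      proof -
        have "poly Q (inverse x) = 0" using recip x by (simp add: Ol_def)
        moreover have "cmod (inverse x) > 1" using x x0 by (simp add: Ol_def norm_inverse one_less_inverse_iff)
        ultimately show ?thesis by (simp add: Og_def)
      qed
      then show "x \<in> inverse ` Og" by (intro image_eqI[of _ _ "inverse x"]) auto
    qed
  qed
  moreover have "inj_on inverse Og" by (auto simp: inj_on_def)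
  ultimately have "card Ol = card Og" using card_image by metis
  then have evenO: "card Off = 2 * card Og" using finOg finOl disjO by (simp add: OffU card_Un_disjoint)
  have "d = card {x. poly Q x = 0}" using cardR by simp
  also have "{x. poly Q x = 0} = U \<union> Off" by (auto simp: U_def Off_def)
  also have "card (U \<union> Off) = card U + card Off"
    using finRt by (intro card_Un_disjoint) (auto simp: U_def Off_def intro: finite_subset[OF _ finRt])
  finally have dsum: "d = card U + card Off" .
  have N3: "N \<ge> 3"
  proof (rule ccontr)
    assume "\<not> N \<ge> 3"
    then have "card A = 2" using N2 NA by simp
    then obtain x y where xy: "A = {x, y}" "x \<noteq> y" by (auto simp: card_2_iff)
    obtain a where a: "A = {0, a}" "a \<noteq> 0" using xy A0 by auto
    have "poly Q (sp 1) = 1 + sp 1 ^ a" using a by (simp add: polyQ)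
    then have "sp 1 ^ a = -1" using sp1root by (simp add: add_eq_0_iff)
    then have "sp 1 ^ (a * 2) = 1" by (simp add: power_mult)
    then have "sp 1 ^ (2 * a) = 1" by (simp add: mult.commute)
    then show False using nu[of "2 * a"] a(2) by simp
  qed
  have c1: "N \<le> card Off" by (rule part1)
  have final: "5 * N \<le> 2 * d" using c1 part2 evenO dsum N3 by presburger
  have degeq: "degree (mask_poly A) = d" using degP by (simp add: P_def)
  show ?thesis
  proof
    show "card {x::complex. poly (map_poly of_rat (mask_poly A)) x = 0 \<and> cmod x \<noteq> 1} \<ge> N"
      using c1 by (simp add: Off_def Q_def P_def)
    show "real (degree (mask_poly A)) \<ge> 5 * real N / 2"
      using final degeq by simp
  qed
qed

end
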